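(* There exist a connected graph $G$ of order $n\geq 2$ and a graph $H$ with connected components $H_1,\dots,H_k$ such that $\chi_L(G\odot H)=\chi_L(G)+\sum_{t=1}^{k}\bigl(\chi_L(H_t+K_1)-1\bigr)$.
   Context: All graphs are finite and simple. A $k$-coloring of a connected graph $G$ is a map $c:V(G)\to\{1,\dots,k\}$ with $c(u)\neq c(v)$ for adjacent $u,v$; it induces the partition $\Pi=\{C_1,\dots,C_k\}$ into color classes $C_i=c^{-1}(i)$. The color code of $v$ is $c_\Pi(v)=(d(v,C_1),\dots,d(v,C_k))$ with $d(v,C_i)=\min\{d(v,x): x\in C_i\}$ (graph distance). $c$ is a locating coloring if distinct vertices have distinct color codes; the locating-chromatic number $\chi_L(G)$ is the least $k$ for which a locating $k$-coloring exists. The corona product $G\odot H$ of a graph $G$ with vertex set $\{a_1,\dots,a_n\}$ and a graph $H$ is obtained from one copy of $G$ and $n$ disjoint copies of $H$ by joining $a_i$ to every vertex of the $i$-th copy of $H$. For a graph $F$, $F+K_1$ denotes the join of $F$ with a single new vertex adjacent to all vertices of $F$. *)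

theory Defs
  imports Main
begin

text \<open>A graph is a pair (V, E) of a vertex set and a set of ordered pairs (edges stored
  in both directions). Finite simple graphs: finite V, E symmetric, irreflexive, within V.\<close>

type_synonym 'a graph = "'a set \<times> ('a \<times> 'a) set"

definition simple_graph :: "'a graph \<Rightarrow> bool" where
  "simple_graph G \<longleftrightarrow> finite (fst G) \<and> snd G \<subseteq> fst G \<times> fst G
     \<and> (\<forall>u v. (u, v) \<in> snd G \<longrightarrow> (v, u) \<in> snd G)
     \<and> (\<forall>u. (u, u) \<notin> snd G)"

inductive walk :: "'a graph \<Rightarrow> 'a \<Rightarrow> 'a \<Rightarrow> nat \<Rightarrow> bool" for G where
  walk_nil: "u \<in> fst G \<Longrightarrow> walk G u u 0"
| walk_cons: "(u, w) \<in> snd G \<Longrightarrow> walk G w v n \<Longrightarrow> walk G u v (Suc n)"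

definition connected_graph :: "'a graph \<Rightarrow> bool" where
  "connected_graph G \<longleftrightarrow> fst G \<noteq> {} \<and> (\<forall>u\<in>fst G. \<forall>v\<in>fst G. \<exists>n. walk G u v n)"

text \<open>Graph distance (only meaningful within a connected graph).\<close>
definition gdist :: "'a graph \<Rightarrow> 'a \<Rightarrow> 'a \<Rightarrow> nat" where
  "gdist G u v = (LEAST n. walk G u v n)"

definition setdist :: "'a graph \<Rightarrow> 'a \<Rightarrow> 'a set \<Rightarrow> nat" where
  "setdist G v C = Min ((\<lambda>x. gdist G v x) ` C)"

definition color_class :: "'a graph \<Rightarrow> ('a \<Rightarrow> nat) \<Rightarrow> nat \<Rightarrow> 'a set" where
  "color_class G c i = {v \<in> fst G. c v = i}"

definition color_code :: "'a graph \<Rightarrow> ('a \<Rightarrow> nat) \<Rightarrow> nat \<Rightarrow> 'a \<Rightarrow> nat list" where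
  "color_code G c k v = map (\<lambda>i. setdist G v (color_class G c i)) [1..<k+1]"

definition k_coloring :: "'a graph \<Rightarrow> ('a \<Rightarrow> nat) \<Rightarrow> nat \<Rightarrow> bool" where
  "k_coloring G c k \<longleftrightarrow> (\<forall>v\<in>fst G. c v \<in> {1..k})
     \<and> (\<forall>u v. (u, v) \<in> snd G \<longrightarrow> c u \<noteq> c v)
     \<and> (\<forall>i\<in>{1..k}. color_class G c i \<noteq> {})"

definition locating_coloring :: "'a graph \<Rightarrow> ('a \<Rightarrow> nat) \<Rightarrow> nat \<Rightarrow> bool" where
  "locating_coloring G c k \<longleftrightarrow> k_coloring G c k \<and> inj_on (color_code G c k) (fst G)"

definition locating_chromatic_number :: "'a graph \<Rightarrow> nat" where
  "locating_chromatic_number G = (LEAST k. \<exists>c. locating_coloring G c k)"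

text \<open>Corona product: vertex (a, None) is a of G, (a, Some x) is the copy of x in the copy of H at a.\<close>
definition corona :: "'a graph \<Rightarrow> 'b graph \<Rightarrow> ('a \<times> 'b option) graph" where
  "corona G H =
    ((fst G \<times> {None}) \<union> (fst G \<times> Some ` fst H),
     {((a, None), (b, None)) | a b. (a, b) \<in> snd G}
     \<union> {((a, Some x), (a, Some y)) | a x y. a \<in> fst G \<and> (x, y) \<in> snd H}
     \<union> {((a, None), (a, Some x)) | a x. a \<in> fst G \<and> x \<in> fst H}
     \<union> {((a, Some x), (a, None)) | a x. a \<in> fst G \<and> x \<in> fst H})"

text \<open>F + K_1: join with a new vertex None.\<close>
definition join_K1 :: "'a graph \<Rightarrow> 'a option graph" where
  "join_K1 F =
    (insert None (Some ` fst F),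
     {(Some x, Some y) | x y. (x, y) \<in> snd F}
     \<union> {(None, Some x) | x. x \<in> fst F} \<union> {(Some x, None) | x. x \<in> fst F})"

definition induced :: "'a graph \<Rightarrow> 'a set \<Rightarrow> 'a graph" where
  "induced G C = (C, snd G \<inter> (C \<times> C))"

definition components :: "'a graph \<Rightarrow> 'a set set" where
  "components G = {{v \<in> fst G. \<exists>n. walk G u v n} | u. u \<in> fst G}"

end

theory Submission imports Defs begin

lemma walk_in: "walk G u v n \<Longrightarrow> snd G \<subseteq> fst G \<times> fst G \<Longrightarrow> u \<in> fst G \<and> v \<in> fst G"
  by (induction rule: walk.induct) auto

lemma walk_snoc: "walk G u w n \<Longrightarrow> (w, v) \<in> snd G \<Longrightarrow> v \<in> fst G \<Longrightarrow> walk G u v (Suc n)"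
  by (induction rule: walk.induct) (auto intro: walk.intros)

lemma walk_app: "walk G u w m \<Longrightarrow> walk G w v n \<Longrightarrow> walk G u v (m + n)"
  by (induction rule: walk.induct) (auto intro: walk.intros)

lemma walk_rev: assumes "simple_graph G" shows "walk G u v n \<Longrightarrow> walk G v u n"
proof (induction rule: walk.induct)
  case (walk_nil u) then show ?case by (rule walk.intros)
next
  case (walk_cons u w v n)
  have "(w,u) \<in> snd G" "u \<in> fst G" using walk_cons assms unfolding simple_graph_def by auto
  then show ?case using walk_snoc walk_cons by metis
qed

lemma connected_root:
  assumes "simple_graph G" "r \<in> fst G" "\<And>v. v \<in> fst G \<Longrightarrow> \<exists>n. walk G r v n"
  shows "connected_graph G"
  unfolding connected_graph_def
proof (intro conjI ballI)
  show "fst G \<noteq> {}" using assms by auto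
  fix u v assume uv: "u \<in> fst G" "v \<in> fst G"
  obtain m where m: "walk G r u m" using assms(3)[OF uv(1)] by blast
  obtain n where n: "walk G r v n" using assms(3)[OF uv(2)] by blast
  have "walk G u r m" using walk_rev[OF assms(1) m] .
  then have "walk G u v (m + n)" using n by (rule walk_app)
  then show "\<exists>n. walk G u v n" by blast
qed

lemma walk0: "walk G u v 0 \<Longrightarrow> u = v"
  by (erule walk.cases) auto

lemma walk1: "walk G u v (Suc 0) \<Longrightarrow> (u, v) \<in> snd G"
  by (auto elim: walk.cases)

lemma gdist_walk: "\<exists>n. walk G u v n \<Longrightarrow> walk G u v (gdist G u v)"
  unfolding gdist_def by (rule LeastI_ex)

lemma gdist_le: "walk G u v n \<Longrightarrow> gdist G u v \<le> n"
  unfolding gdist_def by (rule Least_le)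

lemma gdist_ne0: assumes "\<exists>n. walk G u v n" "u \<noteq> v" shows "gdist G u v \<noteq> 0"
proof
  assume "gdist G u v = 0"
  then have "walk G u v 0" using gdist_walk[OF assms(1)] by simp
  from walk0[OF this] show False using assms(2) by simp
qed

lemma gdist_ne1: assumes "\<exists>n. walk G u v n" "(u, v) \<notin> snd G" shows "gdist G u v \<noteq> 1"
proof
  assume "gdist G u v = 1"
  then have "walk G u v (Suc 0)" using gdist_walk[OF assms(1)] by simp
  from walk1[OF this] show False using assms(2) by simp
qed

lemma gdist_self: "u \<in> fst G \<Longrightarrow> gdist G u u = 0"
  using gdist_le[OF walk_nil[of u G]] by simp

lemma gdist_edge: "(u, v) \<in> snd G \<Longrightarrow> v \<in> fst G \<Longrightarrow> gdist G u v \<le> 1"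
proof -
  assume a: "(u, v) \<in> snd G" "v \<in> fst G"
  have "walk G u v (Suc 0)" by (rule walk_cons[OF a(1) walk_nil[OF a(2)]])
  then show ?thesis using gdist_le by fastforce
qed

lemma class_finite: "simple_graph G \<Longrightarrow> finite (color_class G c i)"
  unfolding simple_graph_def color_class_def by auto

lemma setdist_zero: "simple_graph G \<Longrightarrow> v \<in> fst G \<Longrightarrow> c v = i \<Longrightarrow> setdist G v (color_class G c i) = 0"
proof -
  assume a: "simple_graph G" "v \<in> fst G" "c v = i"
  have "v \<in> color_class G c i" using a by (simp add: color_class_def)
  then have "Min ((\<lambda>x. gdist G v x) ` color_class G c i) \<le> gdist G v v"
    using class_finite[OF a(1)] by (intro Min_le) auto
  then show ?thesis unfolding setdist_def using gdist_self[OF a(2)] by simp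
qed

lemma setdist_ne0:
  assumes "simple_graph G" "connected_graph G" "v \<in> fst G" "c v \<noteq> i" "color_class G c i \<noteq> {}"
  shows "setdist G v (color_class G c i) \<noteq> 0"
proof -
  let ?S = "(\<lambda>x. gdist G v x) ` color_class G c i"
  have "Min ?S \<in> ?S" using class_finite[OF assms(1)] assms(5) by (intro Min_in) auto
  then obtain x where x: "x \<in> color_class G c i" "Min ?S = gdist G v x" by auto
  have "x \<in> fst G" "c x = i" using x unfolding color_class_def by auto
  then have "x \<noteq> v" using assms(4) by auto
  moreover have "\<exists>n. walk G v x n" using assms(2,3) \<open>x \<in> fst G\<close> unfolding connected_graph_def by blast
  ultimately have "gdist G v x \<noteq> 0" by (intro gdist_ne0) auto
  then show ?thesis unfolding setdist_def using x(2) by simp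
qed

lemma setdist_one:
  assumes "simple_graph G" "connected_graph G" "v \<in> fst G" "c v \<noteq> i" "w \<in> fst G" "c w = i" "(v,w) \<in> snd G"
  shows "setdist G v (color_class G c i) = 1"
proof -
  have ne: "color_class G c i \<noteq> {}" using assms unfolding color_class_def by auto
  have "setdist G v (color_class G c i) \<le> gdist G v w" unfolding setdist_def
    using class_finite[OF assms(1)] assms(5,6) by (intro Min_le) (auto simp: color_class_def)
  also have "\<dots> \<le> 1" using gdist_edge[OF assms(7,5)] .
  finally have "setdist G v (color_class G c i) \<le> 1" .
  moreover have "setdist G v (color_class G c i) \<noteq> 0" using setdist_ne0[OF assms(1-4) ne] .
  ultimately show ?thesis by linarith
qed

lemma code_nth: "i < k \<Longrightarrow> color_code G c k v ! i = setdist G v (color_class G c (Suc i))"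
  unfolding color_code_def by (simp del: upt_Suc)

lemma code_diff:
  assumes "simple_graph G" "connected_graph G" "k_coloring G c k" "u \<in> fst G" "v \<in> fst G" "c u \<noteq> c v"
  shows "color_code G c k u \<noteq> color_code G c k v"
proof
  assume eq: "color_code G c k u = color_code G c k v"
  have ne: "c v \<noteq> c u" using assms(6) by auto
  have cu: "c u \<in> {1..k}" using assms(3,4) unfolding k_coloring_def by auto
  then have ne2: "color_class G c (c u) \<noteq> {}" using assms(3) unfolding k_coloring_def by auto
  have "c u - 1 < k" "Suc (c u - 1) = c u" using cu by auto
  then have "setdist G u (color_class G c (c u)) = setdist G v (color_class G c (c u))"
    using eq code_nth by metis
  then show False using setdist_zero[OF assms(1,4)] setdist_ne0[OF assms(1,2,5) ne ne2] by simp
qed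

lemma locating_inj:
  assumes "simple_graph G" "connected_graph G" "k_coloring G c k" "inj_on c (fst G)"
  shows "locating_coloring G c k"
  unfolding locating_coloring_def
proof (intro conjI inj_onI)
  show "k_coloring G c k" by fact
  fix u v assume uv: "u \<in> fst G" "v \<in> fst G" "color_code G c k u = color_code G c k v"
  show "u = v"
  proof (rule ccontr)
    assume "u \<noteq> v"
    then have "c u \<noteq> c v" using assms(4) uv(1,2) by (auto dest: inj_onD)
    then show False using code_diff[OF assms(1-3) uv(1,2)] uv(3) by blast
  qed
qed

lemma no_col0: "fst G \<noteq> {} \<Longrightarrow> \<not> k_coloring G c 0"
  unfolding k_coloring_def by auto

lemma no_col1: "(u,v) \<in> snd G \<Longrightarrow> u \<in> fst G \<Longrightarrow> v \<in> fst G \<Longrightarrow> \<not> k_coloring G c (Suc 0)"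
  unfolding k_coloring_def by fastforce

lemma lcn_eq: "locating_coloring G c m \<Longrightarrow> (\<And>k c. k < m \<Longrightarrow> \<not> locating_coloring G c k)
   \<Longrightarrow> locating_chromatic_number G = m"
  unfolding locating_chromatic_number_def
  by (rule Least_equality) (auto, meson not_le)


definition GK :: "nat graph" where "GK = ({0,1}, {(0,1),(1,0)})"
definition HK :: "nat graph" where "HK = ({0}, {})"

lemma simpGK: "simple_graph GK" unfolding simple_graph_def GK_def by auto
lemma simpHK: "simple_graph HK" unfolding simple_graph_def HK_def by auto

lemma connGK: "connected_graph GK"
proof (rule connected_root[OF simpGK, of 0])
  show "(0::nat) \<in> fst GK" by (simp add: GK_def)
  have w0: "walk GK 0 0 0" by (rule walk_nil) (simp add: GK_def)
  have w1: "walk GK 0 1 (Suc 0)"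
    by (rule walk_cons[where w = "1::nat"]) (auto simp: GK_def intro!: walk_nil)
  fix v assume "v \<in> fst GK"
  then have "v = 0 \<or> v = 1" by (simp add: GK_def)
  then show "\<exists>n. walk GK 0 v n" using w0 w1 by blast
qed

lemma lcnGK: "locating_chromatic_number GK = 2"
proof (rule lcn_eq)
  show "locating_coloring GK Suc 2"
  proof (rule locating_inj[OF simpGK connGK])
    show "k_coloring GK Suc 2" unfolding k_coloring_def
    proof (intro conjI ballI allI impI)
      fix i :: nat assume "i \<in> {1..2}"
      then have "i = 1 \<or> i = 2" by auto
      then show "color_class GK Suc i \<noteq> {}" by (auto simp: GK_def color_class_def)
    qed (auto simp: GK_def)
  qed simp
  fix k c assume "k < (2::nat)"
  then have "k = 0 \<or> k = Suc 0" by auto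
  then show "\<not> locating_coloring GK c k"
    using no_col0[of GK c] no_col1[of 0 1 GK c] unfolding locating_coloring_def by (auto simp: GK_def)
qed

lemma compHK: "components HK = {{0}}"
  unfolding components_def HK_def using walk_nil[of 0 "({0::nat},{})"] by auto

definition JK :: "nat option graph" where "JK = ({None, Some 0}, {(None, Some 0), (Some 0, None)})"

lemma JK_eq: "join_K1 (induced HK {0}) = JK"
  unfolding join_K1_def induced_def HK_def JK_def by auto

lemma simpJK: "simple_graph JK" unfolding simple_graph_def JK_def by auto

lemma connJK: "connected_graph JK"
proof (rule connected_root[OF simpJK, of None])
  show "None \<in> fst JK" by (simp add: JK_def)
  have w0: "walk JK None None 0" by (rule walk_nil) (simp add: JK_def)
  have w1: "walk JK None (Some 0) (Suc 0)"
    by (rule walk_cons[where w = "Some (0::nat)"]) (auto simp: JK_def intro!: walk_nil)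
  fix v assume "v \<in> fst JK"
  then have "v = None \<or> v = Some 0" by (simp add: JK_def)
  then show "\<exists>n. walk JK None v n" using w0 w1 by blast
qed

lemma lcnJK: "locating_chromatic_number JK = 2"
proof (rule lcn_eq)
  show "locating_coloring JK (\<lambda>x. case x of None \<Rightarrow> 1 | Some _ \<Rightarrow> 2) 2"
  proof (rule locating_inj[OF simpJK connJK])
    show "k_coloring JK (\<lambda>x. case x of None \<Rightarrow> 1 | Some _ \<Rightarrow> 2) 2" unfolding k_coloring_def
    proof (intro conjI ballI allI impI)
      fix i :: nat assume "i \<in> {1..2}"
      then have "i = 1 \<or> i = 2" by auto
      then show "color_class JK (\<lambda>x. case x of None \<Rightarrow> 1 | Some _ \<Rightarrow> 2) i \<noteq> {}"
        by (auto simp: JK_def color_class_def)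
    qed (auto simp: JK_def)
  qed (auto simp: JK_def inj_on_def)
  fix k c assume "k < (2::nat)"
  then have "k = 0 \<or> k = Suc 0" by auto
  then show "\<not> locating_coloring JK c k"
    using no_col0[of JK c] no_col1[of None "Some 0" JK c] unfolding locating_coloring_def by (auto simp: JK_def)
qed

abbreviation "h0 \<equiv> (0::nat, Some (0::nat))"
abbreviation "g0 \<equiv> (0::nat, None :: nat option)"
abbreviation "g1 \<equiv> (1::nat, None :: nat option)"
abbreviation "h1 \<equiv> (1::nat, Some (0::nat))"

definition P4 :: "(nat \<times> nat option) graph" where
  "P4 = ({h0, g0, g1, h1}, {(h0,g0),(g0,h0),(g0,g1),(g1,g0),(g1,h1),(h1,g1)})"

lemma cor_eq: "corona GK HK = P4"
  unfolding corona_def GK_def HK_def P4_def by auto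

lemma simpP4: "simple_graph P4" unfolding simple_graph_def P4_def by auto

lemma connP4: "connected_graph P4"
proof (rule connected_root[OF simpP4, of h0])
  show "h0 \<in> fst P4" by (simp add: P4_def)
  have w3: "walk P4 h1 h1 0" by (rule walk_nil) (simp add: P4_def)
  have w2: "walk P4 g1 h1 (Suc 0)" by (rule walk_cons[OF _ w3]) (simp add: P4_def)
  have w1: "walk P4 g0 h1 (Suc (Suc 0))" using walk_cons[OF _ w2, of g0] by (simp add: P4_def)
  have w0: "walk P4 h0 h1 (Suc (Suc (Suc 0)))" using walk_cons[OF _ w1, of h0] by (simp add: P4_def)
  have x0: "walk P4 g0 g0 0" by (rule walk_nil) (simp add: P4_def)
  have x1: "walk P4 h0 g0 (Suc 0)" by (rule walk_cons[OF _ x0]) (simp add: P4_def)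
  have y0: "walk P4 g1 g1 0" by (rule walk_nil) (simp add: P4_def)
  have y1: "walk P4 g0 g1 (Suc 0)" by (rule walk_cons[OF _ y0]) (simp add: P4_def)
  have y2: "walk P4 h0 g1 (Suc (Suc 0))" by (rule walk_cons[OF _ y1]) (simp add: P4_def)
  have z: "walk P4 h0 h0 0" by (rule walk_nil) (simp add: P4_def)
  fix v assume "v \<in> fst P4"
  then have "v = h0 \<or> v = g0 \<or> v = g1 \<or> v = h1" by (simp add: P4_def)
  then show "\<exists>n. walk P4 h0 v n" using z x1 y2 w0 by blast
qed

definition cP :: "nat \<times> nat option \<Rightarrow> nat" where
  "cP v = (case snd v of None \<Rightarrow> fst v + 2 | Some _ \<Rightarrow> 1)"

lemma P4_loc: "locating_coloring P4 cP 3"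
  unfolding locating_coloring_def
proof (intro conjI inj_onI)
  show kc: "k_coloring P4 cP 3" unfolding k_coloring_def
  proof (intro conjI ballI allI impI)
    fix i :: nat assume "i \<in> {1..3}"
    then have "i = 1 \<or> i = 2 \<or> i = 3" by auto
    moreover have "h0 \<in> color_class P4 cP 1" "g0 \<in> color_class P4 cP 2" "g1 \<in> color_class P4 cP 3"
      by (auto simp: P4_def cP_def color_class_def)
    ultimately show "color_class P4 cP i \<noteq> {}" by auto
  qed (auto simp: P4_def cP_def)
  fix u v assume uv: "u \<in> fst P4" "v \<in> fst P4" "color_code P4 cP 3 u = color_code P4 cP 3 v"
  show "u = v"
  proof (rule ccontr)
    assume ne: "u \<noteq> v"
    show False
    proof (cases "cP u = cP v")
      case False
      then show ?thesis using code_diff[OF simpP4 connP4 kc uv(1,2)] uv(3) by blast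
    next
      case True
      then have "{u,v} = {h0,h1}" using uv ne by (auto simp: P4_def cP_def)
      have cls: "color_class P4 cP 2 = {g0}" by (auto simp: color_class_def P4_def cP_def)
      have "setdist P4 h0 {g0} = gdist P4 h0 g0" "setdist P4 h1 {g0} = gdist P4 h1 g0"
        by (simp_all add: setdist_def)
      have a: "gdist P4 h0 g0 \<le> 1" by (rule gdist_edge) (auto simp: P4_def)
      have b: "gdist P4 h1 g0 \<noteq> 0" "gdist P4 h1 g0 \<noteq> 1"
      proof -
        have ex: "\<exists>n. walk P4 h1 g0 n" using connP4 unfolding connected_graph_def by (simp add: P4_def)
        show "gdist P4 h1 g0 \<noteq> 0" by (rule gdist_ne0[OF ex]) simp
        show "gdist P4 h1 g0 \<noteq> 1" by (rule gdist_ne1[OF ex]) (simp add: P4_def)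
      qed
      have "color_code P4 cP 3 h0 \<noteq> color_code P4 cP 3 h1"
      proof
        assume eq: "color_code P4 cP 3 h0 = color_code P4 cP 3 h1"
        have "color_code P4 cP 3 h0 ! 1 = setdist P4 h0 (color_class P4 cP (Suc 1))"
          "color_code P4 cP 3 h1 ! 1 = setdist P4 h1 (color_class P4 cP (Suc 1))"
          by (rule code_nth, simp)+
        then have "setdist P4 h0 {g0} = setdist P4 h1 {g0}" using eq cls by (simp add: numeral_2_eq_2)
        then have "gdist P4 h0 g0 = gdist P4 h1 g0" by (simp add: setdist_def)
        then show False using a b by linarith
      qed
      then show False using uv(3) \<open>{u,v} = {h0,h1}\<close> by (auto simp: doubleton_eq_iff)
    qed
  qed
qed

lemma P4_no2: "\<not> locating_coloring P4 c 2"
proof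
  assume "locating_coloring P4 c 2"
  then have kc: "k_coloring P4 c 2" and inj: "inj_on (color_code P4 c 2) (fst P4)"
    unfolding locating_coloring_def by auto
  have V: "h0 \<in> fst P4" "g0 \<in> fst P4" "g1 \<in> fst P4" by (auto simp: P4_def)
  have E: "(h0,g0) \<in> snd P4" "(g1,g0) \<in> snd P4" by (auto simp: P4_def)
  have cols: "c h0 \<in> {1,2}" "c g0 \<in> {1,2}" "c g1 \<in> {1,2}" "c h0 \<noteq> c g0" "c g1 \<noteq> c g0"
    using kc V E unfolding k_coloring_def by auto
  have same: "c h0 = c g1" using cols by auto
  have "\<forall>i\<in>{1,2}. setdist P4 h0 (color_class P4 c i) = setdist P4 g1 (color_class P4 c i)"
  proof
    fix i :: nat assume "i \<in> {1,2}"
    then have "i = c h0 \<or> i = c g0" using cols by auto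
    then show "setdist P4 h0 (color_class P4 c i) = setdist P4 g1 (color_class P4 c i)"
    proof
      assume "i = c h0" then show ?thesis using setdist_zero[OF simpP4] V same by metis
    next
      assume i: "i = c g0"
      show ?thesis using setdist_one[OF simpP4 connP4 V(1) _ V(2) _ E(1)] 
          setdist_one[OF simpP4 connP4 V(3) _ V(2) _ E(2)] i cols by metis
    qed
  qed
  then have "color_code P4 c 2 h0 = color_code P4 c 2 g1"
    unfolding color_code_def by (simp add: numeral_2_eq_2 upt_rec)
  then show False using inj V by (auto dest: inj_onD)
qed

lemma lcnP4: "locating_chromatic_number P4 = 3"
proof (rule lcn_eq[OF P4_loc])
  fix k c assume "k < (3::nat)"
  then have "k = 0 \<or> k = Suc 0 \<or> k = 2" by auto
  then show "\<not> locating_coloring P4 c k"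
    using no_col0[of P4 c] no_col1[of h0 g0 P4 c] P4_no2 unfolding locating_coloring_def by (auto simp: P4_def)
qed

theorem theorem3:
  shows "\<exists>(G :: nat graph) (H :: nat graph).
     simple_graph G \<and> connected_graph G \<and> card (fst G) \<ge> 2 \<and>
     simple_graph H \<and> fst H \<noteq> {} \<and>
     locating_chromatic_number (corona G H) =
       locating_chromatic_number G +
       (\<Sum>C\<in>components H. locating_chromatic_number (join_K1 (induced H C)) - 1)"
  apply (rule exI[of _ GK], rule exI[of _ HK])
  apply (simp add: simpGK connGK simpHK cor_eq lcnP4 lcnGK compHK JK_eq lcnJK)
  apply (simp add: GK_def HK_def)
  done

end
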